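(* Let $k\geq2$ and let $L=(l_1,\dots,l_k)$ be positive integers with sum $n$ which are generic and reduced. Then the Euler characteristic of $Tonn^{n,k}(L)$ is $0$.
   Context: $L=(l_1,\dots,l_k)$ is generic if for all subsets $I,J\subseteq[k]$, $\sum_{i\in I}l_i=\sum_{j\in J}l_j$ implies $I=J$. $L$ is reduced if $\gcd(l_1,\dots,l_k)=1$. The generalized tonnetz $Tonn^{n,k}(L)$ is the simplicial complex on vertex set $\mathbb{Z}_n$ whose maximal simplices are the sets $\Delta(x;\sigma)=\{x,\,x+l_{\sigma(1)},\dots,x+l_{\sigma(1)}+\dots+l_{\sigma(k-1)}\}$ (sums in $\mathbb{Z}_n$), for $x\in\mathbb{Z}_n$ and $\sigma\in S_k$; its simplices are all subsets of these sets. *)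

theory Defs
  imports Main "HOL-Combinatorics.Permutations"
begin

text \<open>Lengths L = (l 0, ..., l (k-1)) indexed from 0; vertices of Z_n are 0..<n,
  sums taken mod n. Permutations sigma of {0..<k}.\<close>

definition tonnetz_max :: "nat \<Rightarrow> nat \<Rightarrow> (nat \<Rightarrow> nat) \<Rightarrow> nat set set" where
  "tonnetz_max n k l =
     {{(x + (\<Sum>j<i. l (\<sigma> j))) mod n | i. i < k} | x \<sigma>. x < n \<and> \<sigma> permutes {..<k}}"

text \<open>All simplices (including the empty face).\<close>
definition tonnetz :: "nat \<Rightarrow> nat \<Rightarrow> (nat \<Rightarrow> nat) \<Rightarrow> nat set set" where
  "tonnetz n k l = {F. \<exists>D\<in>tonnetz_max n k l. F \<subseteq> D}"

definition generic :: "nat \<Rightarrow> (nat \<Rightarrow> nat) \<Rightarrow> bool" where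
  "generic k l \<longleftrightarrow> (\<forall>I J. I \<subseteq> {..<k} \<longrightarrow> J \<subseteq> {..<k} \<longrightarrow>
      (\<Sum>i\<in>I. l i) = (\<Sum>j\<in>J. l j) \<longrightarrow> I = J)"

definition reduced :: "nat \<Rightarrow> (nat \<Rightarrow> nat) \<Rightarrow> bool" where
  "reduced k l \<longleftrightarrow> Gcd (l ` {..<k}) = 1"

definition euler_char :: "'a set set \<Rightarrow> int" where
  "euler_char K = (\<Sum>F\<in>{F\<in>K. F \<noteq> {}}. (-1) ^ (card F - 1))"

end

theory Submission
  imports Defs
begin


lemma sum_Pow_split:
  assumes "finite A" "a \<in> A"
  shows "(\<Sum>T\<in>Pow A. f T) = (\<Sum>T\<in>Pow (A - {a}). f T + f (insert a T))"
proof -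
  have A: "A = insert a (A - {a})" using assms by auto
  have "(\<Sum>T\<in>Pow A. f T) = (\<Sum>T\<in>Pow (A - {a}) \<union> insert a ` Pow (A - {a}). f T)"
    by (subst A, subst Pow_insert) simp
  also have "\<dots> = (\<Sum>T\<in>Pow (A - {a}). f T) + (\<Sum>T\<in>insert a ` Pow (A - {a}). f T)"
    using assms by (intro sum.union_disjoint) auto
  also have "(\<Sum>T\<in>insert a ` Pow (A - {a}). f T) = (\<Sum>T\<in>Pow (A - {a}). f (insert a T))"
    by (rule sum.reindex_cong[where l="insert a"]) (auto intro!: inj_onI)
  finally show ?thesis by (simp add: sum.distrib)
qed

lemma alt_sum0:
  assumes "finite A" "A \<noteq> {}"
  shows "(\<Sum>T\<in>Pow A. (-1::int) ^ card T) = 0"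
proof -
  obtain a where a: "a \<in> A" using assms by auto
  have "(\<Sum>T\<in>Pow A. (-1::int) ^ card T) = (\<Sum>T\<in>Pow (A - {a}). (-1::int) ^ card T + (-1) ^ card (insert a T))"
    by (rule sum_Pow_split[OF assms(1) a])
  also have "\<dots> = 0"
  proof (intro sum.neutral ballI)
    fix T assume "T \<in> Pow (A - {a})"
    then have "finite T" "a \<notin> T" using finite_subset[OF _ assms(1)] by auto
    then show "(-1::int) ^ card T + (-1) ^ card (insert a T) = 0" by simp
  qed
  finally show ?thesis .
qed

lemma alt_sum1:
  assumes "finite A" "2 \<le> card A"
  shows "(\<Sum>T\<in>Pow A. (-1::int) ^ card T * (\<Sum>i\<in>T. w i)) = 0"
proof -
  have "A \<noteq> {}" using assms by auto
  then obtain a where a: "a \<in> A" by auto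
  have ne: "A - {a} \<noteq> {}"
  proof
    assume "A - {a} = {}"
    then have "A \<subseteq> {a}" by auto
    then have "card A \<le> 1" using card_mono[of "{a}" A] by simp
    then show False using assms by simp
  qed
  have "(\<Sum>T\<in>Pow A. (-1::int) ^ card T * (\<Sum>i\<in>T. w i)) =
      (\<Sum>T\<in>Pow (A - {a}). (-1::int) ^ card T * (\<Sum>i\<in>T. w i) + (-1) ^ card (insert a T) * (\<Sum>i\<in>insert a T. w i))"
    by (rule sum_Pow_split[OF assms(1) a])
  also have "\<dots> = (\<Sum>T\<in>Pow (A - {a}). - w a * (-1) ^ card T)"
  proof (intro sum.cong refl)
    fix T assume "T \<in> Pow (A - {a})"
    then have "finite T" "a \<notin> T" using finite_subset[OF _ assms(1)] by auto
    then show "(-1::int) ^ card T * (\<Sum>i\<in>T. w i) + (-1) ^ card (insert a T) * (\<Sum>i\<in>insert a T. w i) = - w a * (-1) ^ card T"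
      by (simp add: algebra_simps)
  qed
  also have "\<dots> = - w a * (\<Sum>T\<in>Pow (A - {a}). (-1) ^ card T)"
    by (simp add: sum_distrib_left)
  also have "\<dots> = 0" using alt_sum0[OF _ ne] assms by simp
  finally show ?thesis .
qed



definition chn :: "'a set set \<Rightarrow> bool" where
  "chn C \<longleftrightarrow> (\<forall>A\<in>C. \<forall>B\<in>C. A \<subseteq> B \<or> B \<subseteq> A)"

definition chs :: "'a set set \<Rightarrow> 'a set set set" where
  "chs Q = {C. C \<subseteq> Q \<and> chn C}"

lemma chain_top:
  assumes "finite C" "C \<noteq> {}" "chn C"
  shows "\<exists>T\<in>C. \<forall>A\<in>C. A \<subseteq> T"
  using assms
proof (induction C rule: finite_ne_induct)
  case (singleton x) then show ?case by auto
next
  case (insert x F)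
  have "chn F" using insert.prems unfolding chn_def by auto
  then obtain T where T: "T \<in> F" "\<forall>A\<in>F. A \<subseteq> T" using insert.IH by auto
  have "x \<subseteq> T \<or> T \<subseteq> x" using insert.prems T(1) unfolding chn_def by auto
  then show ?case
  proof
    assume "x \<subseteq> T" then show ?thesis using T by auto
  next
    assume "T \<subseteq> x" then show ?thesis using T by blast
  qed
qed

lemma chs_finite_aux: "finite Q \<Longrightarrow> finite (chs Q)"
  unfolding chs_def by (rule finite_subset[of _ "Pow Q"]) auto

lemma chains_decomp:
  assumes "finite Q"
  shows "chs Q = insert {} (\<Union>T\<in>Q. insert T ` chs {C\<in>Q. C \<subset> T})"
proof (intro equalityI subsetI)
  fix X assume X: "X \<in> chs Q"
  show "X \<in> insert {} (\<Union>T\<in>Q. insert T ` chs {C\<in>Q. C \<subset> T})"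
  proof (cases "X = {}")
    case False
    have fX: "finite X" using X assms unfolding chs_def by (auto intro: finite_subset)
    obtain T where T: "T \<in> X" "\<forall>A\<in>X. A \<subseteq> T"
      using chain_top[OF fX False] X unfolding chs_def by auto
    have "X - {T} \<in> chs {C\<in>Q. C \<subset> T}"
      using X T unfolding chs_def chn_def by auto
    moreover have "X = insert T (X - {T})" using T by auto
    ultimately show ?thesis using T X unfolding chs_def by blast
  qed simp
next
  fix X assume "X \<in> insert {} (\<Union>T\<in>Q. insert T ` chs {C\<in>Q. C \<subset> T})"
  then show "X \<in> chs Q"
    unfolding chs_def chn_def by auto
qed

lemma chains_sum_decomp:
  assumes "finite Q"
  shows "(\<Sum>X\<in>chs Q. (-1::int) ^ card X) =
     1 - (\<Sum>T\<in>Q. \<Sum>X\<in>chs {C\<in>Q. C \<subset> T}. (-1::int) ^ card X)"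
proof -
  have fin: "\<And>T. finite (chs {C\<in>Q. C \<subset> T})" using assms by (intro chs_finite_aux) auto
  have ne: "{} \<notin> (\<Union>T\<in>Q. insert T ` chs {C\<in>Q. C \<subset> T})" by auto
  have "(\<Sum>X\<in>chs Q. (-1::int) ^ card X) =
     1 + (\<Sum>X\<in>(\<Union>T\<in>Q. insert T ` chs {C\<in>Q. C \<subset> T}). (-1::int) ^ card X)"
    unfolding chains_decomp[OF assms] using fin assms ne by (subst sum.insert) auto
  also have "(\<Sum>X\<in>(\<Union>T\<in>Q. insert T ` chs {C\<in>Q. C \<subset> T}). (-1::int) ^ card X) =
      (\<Sum>T\<in>Q. \<Sum>X\<in>insert T ` chs {C\<in>Q. C \<subset> T}. (-1::int) ^ card X)"
  proof (rule sum.UNION_disjoint)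
    show "finite Q" by fact
    show "\<forall>T\<in>Q. finite (insert T ` chs {C \<in> Q. C \<subset> T})" using fin by auto
    show "\<forall>T\<in>Q. \<forall>T'\<in>Q. T \<noteq> T' \<longrightarrow>
      insert T ` chs {C \<in> Q. C \<subset> T} \<inter> insert T' ` chs {C \<in> Q. C \<subset> T'} = {}"
    proof (intro ballI impI)
      fix T T' assume "T \<in> Q" "T' \<in> Q" "T \<noteq> T'"
      show "insert T ` chs {C \<in> Q. C \<subset> T} \<inter> insert T' ` chs {C \<in> Q. C \<subset> T'} = {}"
      proof (rule ccontr)
        assume "insert T ` chs {C \<in> Q. C \<subset> T} \<inter> insert T' ` chs {C \<in> Q. C \<subset> T'} \<noteq> {}"
        then obtain X1 X2 where X: "X1 \<in> chs {C \<in> Q. C \<subset> T}" "X2 \<in> chs {C \<in> Q. C \<subset> T'}"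
          "insert T X1 = insert T' X2" by blast
        then have "T \<in> X2" "T' \<in> X1" using \<open>T \<noteq> T'\<close> by blast+
        then have "T \<subset> T'" "T' \<subset> T" using X unfolding chs_def by auto
        then show False by auto
      qed
    qed
  qed
  also have "\<dots> = (\<Sum>T\<in>Q. - (\<Sum>X\<in>chs {C\<in>Q. C \<subset> T}. (-1::int) ^ card X))"
  proof (rule sum.cong[OF refl])
    fix T assume "T \<in> Q"
    have "(\<Sum>X\<in>insert T ` chs {C\<in>Q. C \<subset> T}. (-1::int) ^ card X) =
        (\<Sum>X\<in>chs {C\<in>Q. C \<subset> T}. (-1::int) ^ card (insert T X))"
      by (rule sum.reindex_cong[where l="insert T"])
        (auto simp: chs_def intro!: inj_onI)
    also have "\<dots> = (\<Sum>X\<in>chs {C\<in>Q. C \<subset> T}. - ((-1::int) ^ card X))"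
    proof (rule sum.cong[OF refl])
      fix X assume X: "X \<in> chs {C\<in>Q. C \<subset> T}"
      then have "T \<notin> X" "finite X" using assms unfolding chs_def by (auto intro: finite_subset)
      then show "(-1::int) ^ card (insert T X) = - ((-1::int) ^ card X)" by simp
    qed
    finally show "(\<Sum>X\<in>insert T ` chs {C\<in>Q. C \<subset> T}. (-1::int) ^ card X) =
        - (\<Sum>X\<in>chs {C\<in>Q. C \<subset> T}. (-1::int) ^ card X)" by (simp add: sum_negf)
  qed
  finally show ?thesis by (simp add: sum_negf)
qed

lemma chains_sum_downclosed:
  assumes "finite Q" "\<And>T. T \<in> Q \<Longrightarrow> T \<noteq> {} \<and> finite T"
    "\<And>T S. T \<in> Q \<Longrightarrow> S \<subseteq> T \<Longrightarrow> S \<noteq> {} \<Longrightarrow> S \<in> Q"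
  shows "(\<Sum>X\<in>chs Q. (-1::int) ^ card X) = 1 + (\<Sum>T\<in>Q. (-1::int) ^ card T)"
  using assms
proof (induction "card Q" arbitrary: Q rule: less_induct)
  case (less Q)
  have "(\<Sum>X\<in>chs Q. (-1::int) ^ card X) =
     1 - (\<Sum>T\<in>Q. \<Sum>X\<in>chs {C\<in>Q. C \<subset> T}. (-1::int) ^ card X)"
    by (rule chains_sum_decomp[OF less.prems(1)])
  also have "(\<Sum>T\<in>Q. \<Sum>X\<in>chs {C\<in>Q. C \<subset> T}. (-1::int) ^ card X) = (\<Sum>T\<in>Q. - ((-1::int) ^ card T))"
  proof (rule sum.cong[OF refl])
    fix T assume T: "T \<in> Q"
    have TT: "T \<noteq> {}" "finite T" using less.prems(2)[OF T] by auto
    have eq: "{C\<in>Q. C \<subset> T} = Pow T - {{}, T}"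
      using less.prems(2,3) T by auto
    have cl: "card {C\<in>Q. C \<subset> T} < card Q"
      using T less.prems(1) by (intro psubset_card_mono) auto
    have "(\<Sum>X\<in>chs {C\<in>Q. C \<subset> T}. (-1::int) ^ card X) = 1 + (\<Sum>S\<in>{C\<in>Q. C \<subset> T}. (-1::int) ^ card S)"
      by (rule less.hyps[OF cl]) (use less.prems in auto)
    also have "(\<Sum>S\<in>{C\<in>Q. C \<subset> T}. (-1::int) ^ card S) = (\<Sum>S\<in>Pow T - {{}, T}. (-1::int) ^ card S)"
      by (simp only: eq)
    also have "\<dots> = (\<Sum>S\<in>Pow T. (-1::int) ^ card S) - 1 - (-1) ^ card T"
    proof -
      have "(\<Sum>S\<in>Pow T. (-1::int) ^ card S) = (\<Sum>S\<in>Pow T - {{}, T}. (-1::int) ^ card S) + (\<Sum>S\<in>{{}, T}. (-1::int) ^ card S)"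
        using TT by (intro sum.subset_diff) auto
      then show ?thesis using TT by simp
    qed
    also have "\<dots> = - 1 - (-1) ^ card T" using alt_sum0[OF TT(2,1)] by simp
    finally show "(\<Sum>X\<in>chs {C\<in>Q. C \<subset> T}. (-1::int) ^ card X) = - ((-1::int) ^ card T)" by simp
  qed
  finally show ?case by (simp add: sum_negf)
qed


lemma chain_ext:
  assumes "finite X" "chn X" "\<forall>C\<in>X. C \<subseteq> A" "finite (A::nat set)"
  shows "\<exists>xs. distinct xs \<and> set xs = A \<and> (\<forall>C\<in>X. \<exists>i. set (take i xs) = C)"
  using assms
proof (induction "card X" arbitrary: X A rule: less_induct)
  case (less X A)
  show ?case
  proof (cases "X = {}")
    case True
    then show ?thesis using less.prems by (intro exI[of _ "sorted_list_of_set A"]) auto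
  next
    case False
    obtain M where M: "M \<in> X" "\<forall>C\<in>X. C \<subseteq> M" using chain_top[OF less.prems(1) False less.prems(2)] by auto
    have "card X > 0" using M less.prems(1) card_gt_0_iff by blast
    then have cl: "card (X - {M}) < card X" using M less.prems(1) by simp
    have "chn (X - {M})" using less.prems(2) unfolding chn_def by auto
    moreover have "finite M" using M(1) less.prems(3,4) finite_subset by blast
    ultimately obtain ys where ys: "distinct ys" "set ys = M" "\<forall>C\<in>X - {M}. \<exists>i. set (take i ys) = C"
      using less.hyps[OF cl, of M] less.prems(1) M by auto
    define xs where "xs = ys @ sorted_list_of_set (A - M)"
    have "distinct xs" "set xs = A"
      using ys less.prems M unfolding xs_def by auto
    moreover have "\<forall>C\<in>X. \<exists>i. set (take i xs) = C"
    proof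
      fix C assume C: "C \<in> X"
      show "\<exists>i. set (take i xs) = C"
      proof (cases "C = M")
        case True
        then show ?thesis using ys unfolding xs_def by (intro exI[of _ "length ys"]) auto
      next
        case False
        then obtain i where i: "set (take i ys) = C" using ys C by auto
        then show ?thesis unfolding xs_def
          by (intro exI[of _ "min i (length ys)"]) (auto simp: min_def)
      qed
    qed
    ultimately show ?thesis by blast
  qed
qed

lemma perm_of_list:
  assumes "distinct xs" "set xs = {..<k}"
  shows "(\<lambda>j. if j < k then xs ! j else j) permutes {..<k}"
proof (rule bij_imp_permutes)
  have len: "length xs = k" using assms distinct_card by fastforce
  have "bij_betw ((!) xs) {..<k} {..<k}" using assms len by (intro bij_betw_nth) auto
  then show "bij_betw (\<lambda>j. if j < k then xs ! j else j) {..<k} {..<k}"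
    by (rule bij_betw_cong[THEN iffD1, rotated]) auto
qed auto

lemma psum_list:
  assumes "distinct xs" "i \<le> length xs"
  shows "(\<Sum>j<i. l (xs ! j)) = (\<Sum>c\<in>set (take i xs). l c)"
proof -
  have "(\<Sum>c\<in>set (take i xs). l c) = sum_list (map l (take i xs))"
    using assms by (simp add: sum_list_distinct_conv_sum_set)
  also have "\<dots> = (\<Sum>j<i. l (xs ! j))"
    using assms by (simp add: sum_list_sum_nth atLeast0LessThan min_def)
  finally show ?thesis by simp
qed

lemma sum_rot:
  fixes g :: "nat \<Rightarrow> nat"
  assumes "a < k" "i < k"
  shows "(\<Sum>t<a. g t) + (\<Sum>t<(if a \<le> i then i - a else i + k - a). g ((a + t) mod k)) =
    (if a \<le> i then (\<Sum>t<i. g t) else (\<Sum>t<k. g t) + (\<Sum>t<i. g t))"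
proof -
  have shift: "\<And>m. a + m \<le> k \<Longrightarrow> (\<Sum>t<a. g t) + (\<Sum>t<m. g ((a + t) mod k)) = (\<Sum>t<a + m. g t)"
  proof -
    fix m show "a + m \<le> k \<Longrightarrow> (\<Sum>t<a. g t) + (\<Sum>t<m. g ((a + t) mod k)) = (\<Sum>t<a + m. g t)"
      by (induction m) auto
  qed
  have split: "\<And>p q (f::nat\<Rightarrow>nat). (\<Sum>t<p + q. f t) = (\<Sum>t<p. f t) + (\<Sum>t<q. f (p + t)) "
  proof -
    fix p q and f :: "nat \<Rightarrow> nat" show "(\<Sum>t<p + q. f t) = (\<Sum>t<p. f t) + (\<Sum>t<q. f (p + t))"
      by (induction q) auto
  qed
  show ?thesis
  proof (cases "a \<le> i")
    case True
    then show ?thesis using shift[of "i - a"] assms by simp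
  next
    case False
    have e: "i + k - a = (k - a) + i" using False assms by simp
    have "(\<Sum>t<(k - a) + i. g ((a + t) mod k)) = (\<Sum>t<k - a. g ((a + t) mod k)) + (\<Sum>t<i. g ((a + (k - a + t)) mod k))"
      by (rule split)
    also have "(\<Sum>t<i. g ((a + (k - a + t)) mod k)) = (\<Sum>t<i. g t)"
      using assms False by (intro sum.cong) auto
    finally show ?thesis using False e shift[of "k - a"] assms by simp
  qed
qed


definition wt :: "(nat \<Rightarrow> nat) \<Rightarrow> nat set \<Rightarrow> nat" where "wt l T = (\<Sum>i\<in>T. l i)"
definition Py :: "nat \<Rightarrow> nat \<Rightarrow> (nat \<Rightarrow> nat) \<Rightarrow> nat \<Rightarrow> nat set set" where
  "Py n k l y = {T. T \<subseteq> {..<k} \<and> T \<noteq> {} \<and> y + wt l T < n}"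
definition Phi :: "(nat \<Rightarrow> nat) \<Rightarrow> nat \<Rightarrow> nat set set \<Rightarrow> nat set" where
  "Phi l y X = insert y ((\<lambda>C. y + wt l C) ` X)"

lemma perm_psum_wt:
  fixes \<sigma> l :: "nat \<Rightarrow> nat"
  assumes "\<sigma> permutes {..<k}"
  shows "(\<Sum>j<i. l (\<sigma> j)) = wt l (\<sigma> ` {..<i})"
proof -
  have "inj_on \<sigma> {..<i}" using permutes_inj[OF assms] by (auto intro: inj_on_subset)
  then show ?thesis unfolding wt_def by (simp add: sum.reindex)
qed

lemma perm_psum_total:
  fixes \<sigma> l :: "nat \<Rightarrow> nat"
  assumes "\<sigma> permutes {..<k}" "(\<Sum>i<k. l i) = n"
  shows "(\<Sum>j<k. l (\<sigma> j)) = n"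
  using perm_psum_wt[OF assms(1), of l k] permutes_image[OF assms(1)] assms(2)
  unfolding wt_def by simp

lemma perm_psum_lt:
  fixes \<sigma> l :: "nat \<Rightarrow> nat"
  assumes "\<sigma> permutes {..<k}" "(\<Sum>i<k. l i) = n" "\<forall>i<k. l i > 0" "i < k"
  shows "(\<Sum>j<i. l (\<sigma> j)) < n"
proof -
  have "(\<Sum>j<Suc i. l (\<sigma> j)) \<le> (\<Sum>j<k. l (\<sigma> j))"
    using assms(4) by (intro sum_mono2) auto
  moreover have "l (\<sigma> i) > 0" using assms permutes_in_image[OF assms(1)] by auto
  ultimately show ?thesis using perm_psum_total[OF assms(1,2)] by simp
qed

lemma wt_pos:
  assumes "\<forall>i<k. l i > 0" "T \<subseteq> {..<k}" "T \<noteq> {}"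
  shows "wt l T > 0"
proof -
  obtain c where c: "c \<in> T" using assms by auto
  have "finite T" using assms(2) finite_subset by blast
  then have "l c \<le> wt l T" unfolding wt_def using c by (intro member_le_sum) auto
  moreover have "l c > 0" using assms c by auto
  ultimately show ?thesis by simp
qed

lemma wt_full:
  assumes "(\<Sum>i<k. l i) = n" shows "wt l {..<k} = n"
  using assms unfolding wt_def by simp

lemma wt_le:
  assumes "(\<Sum>i<k. l i) = n" "T \<subseteq> {..<k}" shows "wt l T \<le> n"
  using assms unfolding wt_def by (metis finite_lessThan sum_mono2 zero_le)

lemma dir1:
  assumes "\<forall>i<k. l i > 0" "(\<Sum>i<k. l i) = n" "y < n" "X \<in> chs (Py n k l y)"
  shows "Phi l y X \<in> tonnetz n k l"
proof -
  have XP: "X \<subseteq> Py n k l y" "chn X" using assms(4) unfolding chs_def by auto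
  have fX: "finite X" using XP(1) unfolding Py_def by (rule finite_subset) auto
  obtain xs where xs: "distinct xs" "set xs = {..<k}" "\<forall>C\<in>X. \<exists>i. set (take i xs) = C"
    using chain_ext[OF fX XP(2), of "{..<k}"] XP(1) unfolding Py_def by auto
  have len: "length xs = k" using xs distinct_card by fastforce
  define \<sigma> where "\<sigma> = (\<lambda>j. if j < k then xs ! j else j)"
  have sp: "\<sigma> permutes {..<k}" unfolding \<sigma>_def by (rule perm_of_list[OF xs(1,2)])
  have "0 < k"
  proof (rule ccontr)
    assume "\<not> 0 < k" then have "n = 0" using assms(2) by simp
    then show False using assms(3) by simp
  qed
  define D where "D = {(y + (\<Sum>j<i. l (\<sigma> j))) mod n | i. i < k}"
  have "D \<in> tonnetz_max n k l" unfolding D_def tonnetz_max_def using assms(3) sp by blast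
  moreover have "Phi l y X \<subseteq> D"
  proof
    fix z assume "z \<in> Phi l y X"
    then consider "z = y" | C where "C \<in> X" "z = y + wt l C" unfolding Phi_def by auto
    then show "z \<in> D"
    proof cases
      case 1 then show ?thesis unfolding D_def using \<open>0 < k\<close> assms(3)
        by (intro CollectI exI[of _ 0]) auto
    next
      case 2
      obtain i where i: "set (take i xs) = C" using xs 2 by auto
      define i' where "i' = min i k"
      have i': "set (take i' xs) = C" using i len unfolding i'_def by (auto simp: min_def)
      have CP: "y + wt l C < n" using 2 XP unfolding Py_def by auto
      have "i' < k"
      proof (rule ccontr)
        assume "\<not> i' < k" then have "i' = k" unfolding i'_def by simp
        then have "C = {..<k}" using i' len xs by simp
        then show False using CP wt_full[OF assms(2)] by simp
      qed
      have "(\<Sum>j<i'. l (\<sigma> j)) = (\<Sum>j<i'. l (xs ! j))"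
        using \<open>i' < k\<close> unfolding \<sigma>_def by (intro sum.cong) auto
      also have "\<dots> = wt l C" using psum_list[OF xs(1), of i' l] \<open>i' < k\<close> len i'
        unfolding wt_def by simp
      finally have "z = (y + (\<Sum>j<i'. l (\<sigma> j))) mod n" using 2 CP by simp
      then show ?thesis unfolding D_def using \<open>i' < k\<close> by blast
    qed
  qed
  ultimately show ?thesis unfolding tonnetz_def by blast
qed

lemma rot_permutes:
  fixes a k :: nat
  assumes "a < k"
  shows "(\<lambda>j. if j < k then (a + j) mod k else j) permutes {..<k}"
proof (rule bij_imp_permutes)
  let ?r = "\<lambda>j. if j < k then (a + j) mod k else j"
  have e: "\<And>j. j < k \<Longrightarrow> ?r j = (if a + j < k then a + j else a + j - k)"
    using assms by (auto simp: mod_if le_mod_geq)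
  have inj: "inj_on ?r {..<k}"
  proof (rule inj_onI)
    fix i j assume "i \<in> {..<k}" "j \<in> {..<k}" "?r i = ?r j"
    then show "i = j" using e[of i] e[of j] by (auto split: if_splits)
  qed
  have sub: "?r ` {..<k} \<subseteq> {..<k}" using assms by auto
  have "?r ` {..<k} = {..<k}" by (rule endo_inj_surj[OF _ sub inj]) simp
  then show "bij_betw ?r {..<k} {..<k}" using inj unfolding bij_betw_def by simp
qed simp

lemma dir2:
  assumes lpos: "\<forall>i<k. l i > 0" and lsum: "(\<Sum>i<k. l i) = n"
    and F: "F \<in> tonnetz n k l" "F \<noteq> {}"
  shows "\<exists>y X. y < n \<and> X \<in> chs (Py n k l y) \<and> F = Phi l y X"
proof -
  obtain D where D: "D \<in> tonnetz_max n k l" "F \<subseteq> D" using F unfolding tonnetz_def by auto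
  then obtain x \<sigma> where x: "x < n" "\<sigma> permutes {..<k}"
    and Dd: "D = {(x + (\<Sum>j<i. l (\<sigma> j))) mod n | i. i < k}"
    unfolding tonnetz_max_def by blast
  define S where "S i = (\<Sum>j<i. l (\<sigma> j))" for i
  have n0: "0 < n" using x by simp
  have Dimg: "D = (\<lambda>i. (x + S i) mod n) ` {..<k}" unfolding Dd S_def by auto
  have fF: "finite F" using D(2) Dimg finite_subset by blast
  define y where "y = Min F"
  have yF: "y \<in> F" and ymin: "\<And>z. z \<in> F \<Longrightarrow> y \<le> z"
    using fF F(2) unfolding y_def by auto
  obtain a where a: "a < k" "y = (x + S a) mod n" using yF D(2) Dimg by auto
  have yn: "y < n" using a n0 by simp
  define \<rho> where "\<rho> = (\<lambda>j. if j < k then (a + j) mod k else j)"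
  define \<tau> where "\<tau> = \<sigma> \<circ> \<rho>"
  have tp: "\<tau> permutes {..<k}" unfolding \<tau>_def \<rho>_def
    by (rule permutes_compose[OF rot_permutes[OF a(1)] x(2)])
  define St where "St j = (\<Sum>t<j. l (\<tau> t))" for j
  have St_lt: "\<And>j. j < k \<Longrightarrow> St j < n" unfolding St_def
    using perm_psum_lt[OF tp lsum lpos] by blast
  have St_wt: "\<And>j. St j = wt l (\<tau> ` {..<j})" unfolding St_def by (rule perm_psum_wt[OF tp])
  have Sk: "S k = n" unfolding S_def by (rule perm_psum_total[OF x(2) lsum])
  have rot: "\<exists>j<k. (x + S i) mod n = (y + St j) mod n" if i: "i < k" for i
  proof -
    define j where "j = (if a \<le> i then i - a else i + k - a)"
    have jk: "j < k" using i a unfolding j_def by auto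
    have "St j = (\<Sum>t<j. l (\<sigma> ((a + t) mod k)))"
      unfolding St_def \<tau>_def \<rho>_def using jk by (intro sum.cong) auto
    then have "S a + St j = (if a \<le> i then S i else S k + S i)"
      using sum_rot[OF a(1) i, of "\<lambda>t. l (\<sigma> t)"] unfolding S_def j_def by simp
    moreover have "(y + St j) mod n = (x + (S a + St j)) mod n"
      unfolding a(2) by (simp add: mod_add_left_eq add.assoc)
    ultimately have "(y + St j) mod n = (x + S i) mod n"
      using Sk by (cases "a \<le> i") (simp_all add: add.left_commute)
    then show ?thesis using jk by metis
  qed
  have Fdesc: "\<exists>j<k. z = y + St j \<and> y + St j < n" if z: "z \<in> F" for z
  proof -
    obtain i where i: "i < k" "z = (x + S i) mod n" using z D(2) Dimg by auto
    obtain j where j: "j < k" "z = (y + St j) mod n" using rot[OF i(1)] i by auto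
    have "y + St j < n"
    proof (rule ccontr)
      assume "\<not> y + St j < n"
      then have "z = y + St j - n" using j yn St_lt[OF j(1)]
        by (simp add: mod_if le_mod_geq)
      then have "z < y" using St_lt[OF j(1)] yn \<open>\<not> y + St j < n\<close> by simp
      then show False using ymin[OF z] by simp
    qed
    then show ?thesis using j by auto
  qed
  define X where "X = {\<tau> ` {..<j} | j. 0 < j \<and> j < k \<and> y + St j \<in> F}"
  have Dlt: "\<And>z. z \<in> F \<Longrightarrow> z < n" using D(2) Dimg n0 by auto
  have "X \<subseteq> Py n k l y"
  proof
    fix C assume "C \<in> X"
    then obtain j where j: "C = \<tau> ` {..<j}" "0 < j" "j < k" "y + St j \<in> F" unfolding X_def by auto
    have "\<tau> ` {..<j} \<subseteq> \<tau> ` {..<k}" by (rule image_mono) (use j in auto)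
    then have "C \<subseteq> {..<k}" using j(1) permutes_image[OF tp] by simp
    moreover have "C \<noteq> {}" using j by auto
    moreover have "y + wt l C < n" using Dlt[OF j(4)] St_wt j(1) by simp
    ultimately show "C \<in> Py n k l y" unfolding Py_def by auto
  qed
  moreover have "chn X"
    unfolding chn_def X_def
  proof (intro ballI)
    fix A B assume "A \<in> {\<tau> ` {..<j} | j. 0 < j \<and> j < k \<and> y + St j \<in> F}"
      "B \<in> {\<tau> ` {..<j} | j. 0 < j \<and> j < k \<and> y + St j \<in> F}"
    then obtain i j where "A = \<tau> ` {..<i}" "B = \<tau> ` {..<j}" by auto
    then show "A \<subseteq> B \<or> B \<subseteq> A"
      by (cases "i \<le> j") (auto intro: image_mono)
  qed
  moreover have "F = Phi l y X"
  proof
    show "F \<subseteq> Phi l y X"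
    proof
      fix z assume z: "z \<in> F"
      obtain j where j: "j < k" "z = y + St j" using Fdesc[OF z] by auto
      show "z \<in> Phi l y X"
      proof (cases "j = 0")
        case True then show ?thesis using j unfolding Phi_def St_def by simp
      next
        case False
        then have "\<tau> ` {..<j} \<in> X" using j z unfolding X_def by auto
        then show ?thesis using j St_wt unfolding Phi_def by auto
      qed
    qed
    show "Phi l y X \<subseteq> F"
      using yF St_wt unfolding Phi_def X_def by auto
  qed
  ultimately show ?thesis using yn unfolding chs_def by blast
qed


lemma Py_finite: "finite (Py n k l y)"
  unfolding Py_def by (rule finite_subset[of _ "Pow {..<k}"]) auto

lemma chs_finite: "finite Q \<Longrightarrow> finite (chs Q)"
  unfolding chs_def by (rule finite_subset[of _ "Pow Q"]) auto

lemma Phi_ge: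
  assumes "X \<subseteq> Py n k l y" "z \<in> Phi l y X" shows "y \<le> z"
  using assms unfolding Phi_def by auto

lemma Phi_notin:
  assumes "\<forall>i<k. l i > 0" "X \<subseteq> Py n k l y"
  shows "y \<notin> (\<lambda>C. y + wt l C) ` X"
proof
  assume "y \<in> (\<lambda>C. y + wt l C) ` X"
  then obtain C where "C \<in> X" "y = y + wt l C" by auto
  moreover have "wt l C > 0" using wt_pos[OF assms(1)] \<open>C \<in> X\<close> assms(2) unfolding Py_def by auto
  ultimately show False by simp
qed

lemma wt_inj:
  assumes "generic k l" shows "inj_on (wt l) (Pow {..<k})"
  using assms unfolding generic_def wt_def inj_on_def by auto

lemma inj_Phi:
  assumes "generic k l" "\<forall>i<k. l i > 0"
  shows "inj_on (\<lambda>(y, X). Phi l y X) (Sigma {..<n} (\<lambda>y. chs (Py n k l y)))"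
proof (rule inj_onI, clarify)
  fix y X y' X'
  assume X: "X \<in> chs (Py n k l y)" and X': "X' \<in> chs (Py n k l y')" and eq: "Phi l y X = Phi l y' X'"
  have XP: "X \<subseteq> Py n k l y" "X' \<subseteq> Py n k l y'" using X X' unfolding chs_def by auto
  have "y' \<in> Phi l y X" using eq unfolding Phi_def by auto
  then have "y \<le> y'" using Phi_ge[OF XP(1)] by blast
  moreover have "y \<in> Phi l y' X'" using eq unfolding Phi_def by auto
  then have "y' \<le> y" using Phi_ge[OF XP(2)] by blast
  ultimately have yy: "y = y'" by simp
  have "(\<lambda>C. y + wt l C) ` X = Phi l y X - {y}" using Phi_notin[OF assms(2) XP(1)] unfolding Phi_def by auto
  also have "\<dots> = (\<lambda>C. y + wt l C) ` X'" using Phi_notin[OF assms(2) XP(2)] eq yy unfolding Phi_def by auto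
  finally have "(\<lambda>C. y + wt l C) ` X = (\<lambda>C. y + wt l C) ` X'" .
  then have "(\<lambda>x. x - y) ` ((\<lambda>C. y + wt l C) ` X) = (\<lambda>x. x - y) ` ((\<lambda>C. y + wt l C) ` X')" by simp
  then have "wt l ` X = wt l ` X'" by (simp add: image_image)
  moreover have "X \<subseteq> Pow {..<k}" "X' \<subseteq> Pow {..<k}" using XP unfolding Py_def by auto
  ultimately have "X = X'" using inj_on_image_eq_iff[OF wt_inj[OF assms(1)]] by blast
  then show "y = y' \<and> X = X'" using yy by simp
qed

lemma card_Phi:
  assumes "generic k l" "\<forall>i<k. l i > 0" "X \<in> chs (Py n k l y)"
  shows "card (Phi l y X) = card X + 1"
proof -
  have XP: "X \<subseteq> Py n k l y" using assms unfolding chs_def by auto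
  have fX: "finite X" using XP Py_finite finite_subset by blast
  have "inj_on (\<lambda>C. y + wt l C) X"
  proof (rule inj_onI)
    fix C C' assume "C \<in> X" "C' \<in> X" "y + wt l C = y + wt l C'"
    then show "C = C'" using inj_onD[OF wt_inj[OF assms(1)], of C C'] XP unfolding Py_def by auto
  qed
  then have "card ((\<lambda>C. y + wt l C) ` X) = card X" by (rule card_image)
  then show ?thesis unfolding Phi_def using Phi_notin[OF assms(2) XP] fX by simp
qed

theorem proposition2p6:
  fixes n k :: nat and l :: "nat \<Rightarrow> nat"
  assumes "k \<ge> 2"
    and "\<forall>i<k. l i > 0"
    and "(\<Sum>i<k. l i) = n"
    and "generic k l"
    and "reduced k l"
  shows "euler_char (tonnetz n k l) = 0"
proof -
  note lpos = assms(2) and lsum = assms(3) and gen = assms(4)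
  define D where "D = Sigma {..<n} (\<lambda>y. chs (Py n k l y))"
  define G where "G = (\<lambda>(y, X). Phi l y X)"
  have faces: "{F \<in> tonnetz n k l. F \<noteq> {}} = G ` D"
  proof (intro equalityI subsetI)
    fix F assume "F \<in> {F \<in> tonnetz n k l. F \<noteq> {}}"
    then obtain y X where "y < n" "X \<in> chs (Py n k l y)" "F = Phi l y X"
      using dir2[OF lpos lsum] by blast
    then show "F \<in> G ` D" unfolding D_def G_def by force
  next
    fix F assume "F \<in> G ` D"
    then obtain y X where "y < n" "X \<in> chs (Py n k l y)" "F = Phi l y X"
      unfolding D_def G_def by auto
    then show "F \<in> {F \<in> tonnetz n k l. F \<noteq> {}}"
      using dir1[OF lpos lsum] unfolding Phi_def by auto
  qed
  have "euler_char (tonnetz n k l) = (\<Sum>F\<in>G ` D. (-1::int) ^ (card F - 1))"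
    unfolding euler_char_def faces ..
  also have "\<dots> = (\<Sum>p\<in>D. (-1::int) ^ (card (G p) - 1))"
    using inj_Phi[OF gen lpos] unfolding D_def G_def by (simp add: sum.reindex)
  also have "\<dots> = (\<Sum>p\<in>D. (-1::int) ^ card (snd p))"
    by (rule sum.cong[OF refl]) (auto simp: D_def G_def card_Phi[OF gen lpos])
  also have "\<dots> = (\<Sum>y<n. \<Sum>X\<in>chs (Py n k l y). (-1::int) ^ card X)"
    unfolding D_def by (subst sum.Sigma) (auto simp: chs_finite Py_finite split_beta)
  also have "\<dots> = (\<Sum>y<n. 1 + (\<Sum>T\<in>Py n k l y. (-1::int) ^ card T))"
  proof (rule sum.cong[OF refl], rule chains_sum_downclosed[OF Py_finite])
    fix y T assume "T \<in> Py n k l y"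
    then show "T \<noteq> {} \<and> finite T" unfolding Py_def by (auto intro: finite_subset)
  next
    fix y T S assume T: "T \<in> Py n k l y" and S: "S \<subseteq> T" "S \<noteq> {}"
    have "wt l S \<le> wt l T" unfolding wt_def using T S unfolding Py_def
      by (intro sum_mono2) (auto intro: finite_subset)
    then show "S \<in> Py n k l y" using T S unfolding Py_def by auto
  qed
  also have "\<dots> = int n + (\<Sum>y<n. \<Sum>T\<in>Pow {..<k} - {{}}. if y + wt l T < n then (-1::int) ^ card T else 0)"
  proof -
    have e: "(\<Sum>T\<in>Py n k l y. (-1::int) ^ card T) = (\<Sum>T\<in>Pow {..<k} - {{}}. if y + wt l T < n then (-1::int) ^ card T else 0)" for y
    proof -
      have "Py n k l y = {T \<in> Pow {..<k} - {{}}. y + wt l T < n}" unfolding Py_def by auto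
      then show ?thesis by (simp only:) (rule sum.inter_filter, simp)
    qed
    show ?thesis by (simp add: sum.distrib e)
  qed
  also have "(\<Sum>y<n. \<Sum>T\<in>Pow {..<k} - {{}}. if y + wt l T < n then (-1::int) ^ card T else 0) =
     (\<Sum>T\<in>Pow {..<k} - {{}}. \<Sum>y<n. if y + wt l T < n then (-1::int) ^ card T else 0)"
    by (rule sum.swap)
  also have "\<dots> = (\<Sum>T\<in>Pow {..<k} - {{}}. (-1::int) ^ card T * (int n - (\<Sum>i\<in>T. int (l i))))"
  proof (rule sum.cong[OF refl])
    fix T assume T: "T \<in> Pow {..<k} - {{}}"
    have le: "wt l T \<le> n" using T lsum unfolding wt_def by (auto intro: sum_mono2[of "{..<k}", THEN order.trans])
    have "(\<Sum>y<n. if y + wt l T < n then (-1::int) ^ card T else 0) = (\<Sum>y\<in>{y\<in>{..<n}. y + wt l T < n}. (-1::int) ^ card T)"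
      by (rule sum.inter_filter[symmetric]) simp
    also have "{y\<in>{..<n}. y + wt l T < n} = {..<n - wt l T}" by auto
    also have "(\<Sum>y\<in>{..<n - wt l T}. (-1::int) ^ card T) = (-1::int) ^ card T * int (n - wt l T)" by simp
    also have "int (n - wt l T) = int n - (\<Sum>i\<in>T. int (l i))" using le unfolding wt_def by (simp add: of_nat_diff)
    finally show "(\<Sum>y<n. if y + wt l T < n then (-1::int) ^ card T else 0) = (-1::int) ^ card T * (int n - (\<Sum>i\<in>T. int (l i)))" .
  qed
  also have "int n + \<dots> = (\<Sum>T\<in>Pow {..<k}. (-1::int) ^ card T * (int n - (\<Sum>i\<in>T. int (l i))))"
  proof -
    have "(\<Sum>T\<in>Pow {..<k}. (-1::int) ^ card T * (int n - (\<Sum>i\<in>T. int (l i)))) =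
      (\<Sum>T\<in>Pow {..<k} - {{}}. (-1::int) ^ card T * (int n - (\<Sum>i\<in>T. int (l i)))) +
      (\<Sum>T\<in>{{}}. (-1::int) ^ card T * (int n - (\<Sum>i\<in>T. int (l i))))"
      by (intro sum.subset_diff) auto
    then show ?thesis by simp
  qed
  also have "\<dots> = int n * (\<Sum>T\<in>Pow {..<k}. (-1::int) ^ card T) - (\<Sum>T\<in>Pow {..<k}. (-1::int) ^ card T * (\<Sum>i\<in>T. int (l i)))"
    by (simp add: algebra_simps sum_subtractf sum_distrib_left)
  also have "\<dots> = 0"
  proof -
    have "0 \<in> {..<k}" using assms(1) by simp
    then have "{..<k} \<noteq> {}" by blast
    then show ?thesis using alt_sum0[of "{..<k}"] alt_sum1[of "{..<k}" "\<lambda>i. int (l i)"] assms(1) by simp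
  qed
  finally show ?thesis .
qed


end
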